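(* Let $(q(t),p(t))$ be an orbit of $X_H$ in rotating coordinates. If $(q_1+\mu)p_2-q_2p_1>\mu(q_1+\mu)$ along the orbit, then the curve $q(t)$ is retrograde with respect to $e(t)$. If $(q_1+\mu)p_2-q_2p_1<\mu(q_1+\mu)$ along the orbit, then it is direct.
   Context: For $\mu\in[0,1]$, $H(q,p)=\tfrac12|p|^2+q_1p_2-q_2p_1-\frac{1-\mu}{|q+(\mu,0)|}-\frac{\mu}{|q-(1-\mu,0)|}$ on $(\mathbb{R}^2\setminus\{(-\mu,0),(1-\mu,0)\})\times\mathbb{R}^2$, with $\dot q=\partial H/\partial p$, $\dot p=-\partial H/\partial q$. Let $R_t=\begin{pmatrix}\cos t&-\sin t\\ \sin t&\cos t\end{pmatrix}$. Sidereal coordinates are $\bar q(t)=R_{-t}q(t)$, and $\bar e(t)=R_{-t}(-\mu,0)$ (with $e(t)$ the corresponding point $(-\mu,0)$ in rotating coordinates). A path is called retrograde with respect to $e(t)$ if the angle $\phi(t)=\arg\big(\bar q_1(t)-\bar e_1(t)+i(\bar q_2(t)-\bar e_2(t))\big)$ is increasing, and prograde (direct) if it is decreasing. *)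

theory Defs
  imports "HOL-Analysis.Analysis"
begin

text \<open>Points of the plane are pairs of reals (real \<times> real, with its Euclidean
inner product and norm).  The two primaries sit at (-mu,0) and (1-mu,0).\<close>

definition H :: "real \<Rightarrow> real \<times> real \<Rightarrow> real \<times> real \<Rightarrow> real" where
  "H mu q p =
     (fst p ^ 2 + snd p ^ 2) / 2 + fst q * snd p - snd q * fst p
     - (1 - mu) / norm (q + (mu, 0)) - mu / norm (q - (1 - mu, 0))"

text \<open>An orbit of X_H on an interval I: q(t) avoids the primaries and
  dq/dt = dH/dp, dp/dt = - dH/dq (partial gradients w.r.t. the inner product).\<close>
definition is_orbit ::
  "real \<Rightarrow> real set \<Rightarrow> (real \<Rightarrow> real \<times> real) \<Rightarrow> (real \<Rightarrow> real \<times> real) \<Rightarrow> bool" where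
  "is_orbit mu I q p \<longleftrightarrow>
     is_interval I \<and>
     (\<forall>t\<in>I. q t \<noteq> (- mu, 0) \<and> q t \<noteq> (1 - mu, 0) \<and>
        (\<exists>dq dp. (q has_vector_derivative dq) (at t within I) \<and>
                 (p has_vector_derivative dp) (at t within I) \<and>
                 ((\<lambda>v. H mu (q t) v) has_derivative (\<lambda>v. dq \<bullet> v)) (at (p t)) \<and>
                 ((\<lambda>x. H mu x (p t)) has_derivative (\<lambda>v. - (dp \<bullet> v))) (at (q t))))"

definition rot :: "real \<Rightarrow> real \<times> real \<Rightarrow> real \<times> real" where
  "rot t z = (cos t * fst z - sin t * snd z, sin t * fst z + cos t * snd z)"

definition sidereal_q :: "(real \<Rightarrow> real \<times> real) \<Rightarrow> real \<Rightarrow> real \<times> real" where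
  "sidereal_q q t = rot (- t) (q t)"

definition sidereal_e :: "real \<Rightarrow> real \<Rightarrow> real \<times> real" where
  "sidereal_e mu t = rot (- t) (- mu, 0)"

definition is_angle_fn ::
  "real \<Rightarrow> real set \<Rightarrow> (real \<Rightarrow> real \<times> real) \<Rightarrow> (real \<Rightarrow> real) \<Rightarrow> bool" where
  "is_angle_fn mu I q \<phi> \<longleftrightarrow>
     continuous_on I \<phi> \<and>
     (\<forall>t\<in>I. sidereal_q q t - sidereal_e mu t =
        (norm (sidereal_q q t - sidereal_e mu t) * cos (\<phi> t),
         norm (sidereal_q q t - sidereal_e mu t) * sin (\<phi> t)))"

definition retrograde :: "real \<Rightarrow> real set \<Rightarrow> (real \<Rightarrow> real \<times> real) \<Rightarrow> bool" where
  "retrograde mu I q \<longleftrightarrow>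
     (\<exists>\<phi>. is_angle_fn mu I q \<phi> \<and> (\<forall>s\<in>I. \<forall>t\<in>I. s < t \<longrightarrow> \<phi> s < \<phi> t))"

definition prograde :: "real \<Rightarrow> real set \<Rightarrow> (real \<Rightarrow> real \<times> real) \<Rightarrow> bool" where
  "prograde mu I q \<longleftrightarrow>
     (\<exists>\<phi>. is_angle_fn mu I q \<phi> \<and> (\<forall>s\<in>I. \<forall>t\<in>I. s < t \<longrightarrow> \<phi> t < \<phi> s))"

end

theory Submission
  imports Defs
begin

lemma div_m1: "(d::real) \<noteq> 0 \<Longrightarrow> x / d - 1 = (x - d) / d"
  by (simp add: field_simps)

lemma log_deriv:
  fixes w g :: "real \<Rightarrow> complex"
  assumes s: "s \<in> I"
   and contg: "continuous_on I g" and eg: "\<forall>t\<in>I. exp (g t) = w t"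
   and wd: "(w has_vector_derivative w') (at s within I)" and nz: "w s \<noteq> 0"
  shows "(g has_vector_derivative (w' / w s)) (at s within I)"
proof -
  have cw: "continuous (at s within I) w" using wd has_vector_derivative_continuous by blast
  have "((\<lambda>t. Ln (w t / w s)) \<longlongrightarrow> Ln (w s / w s)) (at s within I)"
    using cw nz by (intro tendsto_intros) (auto simp: continuous_within)
  hence L: "((\<lambda>t. Ln (w t / w s)) \<longlongrightarrow> 0) (at s within I)" using nz by simp
  have "(g \<longlongrightarrow> g s) (at s within I)"
    using contg s by (simp add: continuous_on_eq_continuous_within continuous_within)
  hence G: "((\<lambda>t. g t - g s) \<longlongrightarrow> 0) (at s within I)"
    by (simp add: LIM_zero)
  have "eventually (\<lambda>t. dist (Ln (w t / w s)) 0 < 1) (at s within I)"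
    using tendstoD[OF L] by simp
  moreover have "eventually (\<lambda>t. dist (g t - g s) 0 < 1) (at s within I)"
    using tendstoD[OF G] by simp
  ultimately have "eventually (\<lambda>t. norm (Ln (w t / w s)) < 1 \<and> norm (g t - g s) < 1) (at s within I)"
    by eventually_elim simp
  then obtain d where d: "d > 0" and dP: "\<And>t. t\<in>I \<Longrightarrow> t \<noteq> s \<Longrightarrow> dist t s < d \<Longrightarrow>
      norm (Ln (w t / w s)) < 1 \<and> norm (g t - g s) < 1"
    unfolding eventually_at by blast
  have eq: "g s + Ln (w t / w s) = g t" if "t\<in>I" "dist t s < d" for t
  proof (cases "t = s")
    case True then show ?thesis using nz by simp
  next
    case False
    have wt: "w t \<noteq> 0" using eg that by (metis exp_not_eq_zero)
    have "exp (g t) = exp (g s + Ln (w t / w s))"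
      using eg that s nz wt by (simp add: exp_add)
    then obtain n :: int where n: "g t = g s + Ln (w t / w s) + (of_int (2 * n) * pi) * \<i>"
      using exp_eq by blast
    have "norm ((of_int (2 * n) * pi) * \<i>) = norm ((g t - g s) - Ln (w t / w s))"
      using n by (simp add: algebra_simps)
    also have "\<dots> \<le> norm (g t - g s) + norm (Ln (w t / w s))" by (rule norm_triangle_ineq4)
    also have "\<dots> < 2" using dP[OF that(1) False that(2)] by simp
    finally have nn: "norm ((of_int (2 * n) * pi) * \<i>) < 2" .
    have "norm ((of_int (2 * n) * pi) * \<i>) = 2 * \<bar>real_of_int n\<bar> * pi"
      by (simp add: norm_mult abs_mult)
    with nn have "\<bar>real_of_int n\<bar> * pi < 1" by simp
    moreover have "pi > 1" using pi_gt3 by simp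
    ultimately have "\<bar>real_of_int n\<bar> < 1"
      by (smt (verit) mult_le_cancel_left1 abs_ge_zero)
    hence "n = 0" by linarith
    then show ?thesis using n by simp
  qed
  have D1: "((\<lambda>t. w t / w s) has_vector_derivative w' / w s) (at s within I)"
    using wd by (rule has_vector_derivative_divide)
  have D2: "(Ln has_field_derivative 1) (at ((\<lambda>t. w t / w s) s) within (\<lambda>t. w t / w s) ` I)"
    using has_field_derivative_Ln[of 1] nz by (auto intro: has_field_derivative_at_within)
  have "((Ln \<circ> (\<lambda>t. w t / w s)) has_vector_derivative (w' / w s) * 1) (at s within I)"
    by (rule field_vector_diff_chain_within[OF D1 D2])
  hence "((\<lambda>t. g s + Ln (w t / w s)) has_vector_derivative w' / w s) (at s within I)"
    by (subst add.commute) (simp add: has_vector_derivative_add_const o_def)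
  then show ?thesis
    by (rule has_vector_derivative_transform_within[OF _ d s]) (simp add: eq)
qed

lemma vd_fst: "(q has_vector_derivative dq) F \<Longrightarrow> ((\<lambda>t. fst (q t)) has_real_derivative fst dq) F"
  unfolding has_vector_derivative_def has_field_derivative_def
  by (drule has_derivative_fst, erule has_derivative_eq_rhs) (auto simp: fun_eq_iff)

lemma vd_snd: "(q has_vector_derivative dq) F \<Longrightarrow> ((\<lambda>t. snd (q t)) has_real_derivative snd dq) F"
  unfolding has_vector_derivative_def has_field_derivative_def
  by (drule has_derivative_snd, erule has_derivative_eq_rhs) (auto simp: fun_eq_iff)

lemma pos_deriv_incr:
  fixes f f' :: "real \<Rightarrow> real"
  assumes I: "is_interval I" and D: "\<forall>t\<in>I. (f has_real_derivative f' t) (at t within I)"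
    and pos: "\<forall>t\<in>I. f' t > 0"
    and s: "s\<in>I" and t: "t\<in>I" and st: "s<t"
  shows "f s < f t"
proof -
  have sub: "{s..t} \<subseteq> I" using I s t unfolding is_interval_1 by (meson atLeastAtMost_iff subsetI)
  have "\<exists>x\<in>{s<..<t}. f t - f s = (\<lambda>h. f' x * h) (t - s)"
  proof (rule mvt_simple[OF st])
    fix x assume "s \<le> x" "x \<le> t"
    hence "x \<in> I" using sub by auto
    hence "(f has_real_derivative f' x) (at x within {s..t})"
      using D sub has_field_derivative_subset by blast
    thus "(f has_derivative (\<lambda>h. f' x * h)) (at x within {s..t})"
      by (simp add: has_field_derivative_def)
  qed
  then obtain x where x: "x \<in> {s<..<t}" "f t - f s = f' x * (t - s)" by auto
  have "x \<in> I" using x sub by auto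
  hence "f' x > 0" using pos by auto
  hence "f' x * (t - s) > 0" using st by simp
  with x show ?thesis by linarith
qed

lemma H_dp:
  "((\<lambda>v. H mu x v) has_derivative
     (\<lambda>v. (fst y - snd x) * fst v + (snd y + fst x) * snd v)) (at y)"
  unfolding H_def
  apply (rule has_derivative_eq_rhs)
   apply (rule derivative_eq_intros | simp)+
  apply (rule ext)
  apply (simp add: algebra_simps)
  done


theorem proposition2p1:
  fixes mu :: real and I :: "real set" and q p :: "real \<Rightarrow> real \<times> real"
  assumes "0 \<le> mu" and "mu \<le> 1"
    and "is_orbit mu I q p"
  shows "((\<forall>t\<in>I. (fst (q t) + mu) * snd (p t) - snd (q t) * fst (p t) > mu * (fst (q t) + mu))
           \<longrightarrow> retrograde mu I q) \<and>
         ((\<forall>t\<in>I. (fst (q t) + mu) * snd (p t) - snd (q t) * fst (p t) < mu * (fst (q t) + mu))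
           \<longrightarrow> prograde mu I q)"
proof -
  from assms(3) have I: "is_interval I" and orb: "\<forall>t\<in>I. q t \<noteq> (- mu, 0) \<and> q t \<noteq> (1 - mu, 0) \<and>
        (\<exists>dq dp. (q has_vector_derivative dq) (at t within I) \<and>
                 (p has_vector_derivative dp) (at t within I) \<and>
                 ((\<lambda>v. H mu (q t) v) has_derivative (\<lambda>v. dq \<bullet> v)) (at (p t)) \<and>
                 ((\<lambda>x. H mu x (p t)) has_derivative (\<lambda>v. - (dp \<bullet> v))) (at (q t)))"
    unfolding is_orbit_def by auto
  define dq where "dq t = (fst (p t) - snd (q t), snd (p t) + fst (q t))" for t
  have qd: "(q has_vector_derivative dq t) (at t within I)" if "t\<in>I" for t
  proof -
    from orb that obtain d1 where h1: "(q has_vector_derivative d1) (at t within I)"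
      and h3: "((\<lambda>v. H mu (q t) v) has_derivative (\<lambda>v. d1 \<bullet> v)) (at (p t))" by blast
    have "(\<lambda>v. d1 \<bullet> v) = (\<lambda>v. (fst (p t) - snd (q t)) * fst v + (snd (p t) + fst (q t)) * snd v)"
      using has_derivative_unique[OF h3 H_dp] .
    note deq = fun_cong[OF this]
    have e: "\<And>v. d1 \<bullet> v = (fst (p t) - snd (q t)) * fst v + (snd (p t) + fst (q t)) * snd v"
      using deq by simp
    have "d1 = dq t"
      using e[of "(1,0)"] e[of "(0,1)"] by (simp add: dq_def inner_prod_def prod_eq_iff)
    with h1 show ?thesis by simp
  qed
  define w where "w t = Complex (fst (q t) + mu) (snd (q t))" for t
  define w' where "w' t = Complex (fst (dq t)) (snd (dq t))" for t
  have wd: "(w has_vector_derivative w' t) (at t within I)" if "t\<in>I" for t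
    unfolding has_vector_derivative_complex_iff w_def w'_def
    using vd_fst[OF qd[OF that]] vd_snd[OF qd[OF that]]
    by (auto intro!: derivative_eq_intros)
  have wnz: "w t \<noteq> 0" if "t\<in>I" for t
    using orb that by (auto simp: w_def complex_eq_iff prod_eq_iff)
  have contw: "continuous_on I w" using wd
    by (meson continuous_on_eq_continuous_within has_vector_derivative_continuous)
  obtain g where contg: "continuous_on I g" and eg: "\<And>t. t\<in>I \<Longrightarrow> w t = exp (g t)"
    using continuous_logarithm_on_contractible[OF contw convex_imp_contractible[OF is_interval_convex[OF I]] wnz]
    by blast
  have gd: "(g has_vector_derivative w' t / w t) (at t within I)" if "t\<in>I" for t
  proof -
    have "\<forall>t\<in>I. exp (g t) = w t" using eg by simp
    from log_deriv[OF that contg this wd[OF that] wnz[OF that]] show ?thesis .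
  qed
  define \<phi> where "\<phi> t = Im (g t) - t" for t
  have \<phi>d: "(\<phi> has_real_derivative (Im (w' t / w t) - 1)) (at t within I)" if "t\<in>I" for t
  proof -
    have "((\<lambda>t. Im (g t)) has_real_derivative Im (w' t / w t)) (at t within I)"
      by (rule has_field_derivative_Im[OF gd[OF that]])
    then have "((\<lambda>t. Im (g t) - t) has_real_derivative Im (w' t / w t) - 1) (at t within I)"
      using DERIV_diff[OF _ DERIV_ident] by blast
    then show ?thesis by (simp add: \<phi>_def[abs_def])
  qed
  have den: "(fst (q t) + mu)^2 + (snd (q t))^2 > 0" if "t\<in>I" for t
    using wnz[OF that] by (auto simp: w_def complex_eq_iff sum_power2_gt_zero_iff)
  have key: "Im (w' t / w t) - 1 = ((fst (q t) + mu) * snd (p t) - snd (q t) * fst (p t) - mu * (fst (q t) + mu))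
      / ((fst (q t) + mu)^2 + (snd (q t))^2)" if "t\<in>I" for t
  proof -
    have "Im (w' t / w t) = ((snd (p t) + fst (q t)) * (fst (q t) + mu) - (fst (p t) - snd (q t)) * snd (q t))
       / ((fst (q t) + mu)^2 + (snd (q t))^2)"
      by (simp add: Im_divide w_def w'_def dq_def power2_eq_square)
    also have "\<dots> - 1 = ((snd (p t) + fst (q t)) * (fst (q t) + mu) - (fst (p t) - snd (q t)) * snd (q t)
         - ((fst (q t) + mu)^2 + (snd (q t))^2)) / ((fst (q t) + mu)^2 + (snd (q t))^2)"
      using den[OF that] by (intro div_m1) linarith
    finally show ?thesis by (simp add: algebra_simps power2_eq_square)
  qed
  have angle: "is_angle_fn mu I q \<phi>"
    unfolding is_angle_fn_def
  proof (intro conjI ballI)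
    show "continuous_on I \<phi>" unfolding \<phi>_def by (intro continuous_intros contg)
  next
    fix t assume t: "t \<in> I"
    define r where "r = exp (Re (g t))"
    define \<theta> where "\<theta> = Im (g t)"
    have q1: "fst (q t) = r * cos \<theta> - mu"
      using arg_cong[OF eg[OF t], of Re] by (simp add: w_def r_def \<theta>_def Re_exp)
    have q2: "snd (q t) = r * sin \<theta>"
      using arg_cong[OF eg[OF t], of Im] by (simp add: w_def r_def \<theta>_def Im_exp)
    have D: "sidereal_q q t - sidereal_e mu t = (r * cos (\<phi> t), r * sin (\<phi> t))"
      unfolding sidereal_q_def sidereal_e_def rot_def \<phi>_def \<theta>_def[symmetric]
      by (simp add: q1 q2 cos_diff sin_diff algebra_simps)
    have "norm (r * cos (\<phi> t), r * sin (\<phi> t)) = r"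
      by (simp add: norm_Pair power_mult_distrib r_def flip: distrib_left)
    with D show "sidereal_q q t - sidereal_e mu t =
        (norm (sidereal_q q t - sidereal_e mu t) * cos (\<phi> t),
         norm (sidereal_q q t - sidereal_e mu t) * sin (\<phi> t))" by simp
  qed
  show ?thesis
  proof (intro conjI impI)
    assume pos: "\<forall>t\<in>I. (fst (q t) + mu) * snd (p t) - snd (q t) * fst (p t) > mu * (fst (q t) + mu)"
    have dpos: "\<forall>t\<in>I. Im (w' t / w t) - 1 > 0"
      using pos key den by (auto intro!: divide_pos_pos)
    show "retrograde mu I q" unfolding retrograde_def
      using angle pos_deriv_incr[OF I _ dpos] \<phi>d by blast
  next
    assume neg: "\<forall>t\<in>I. (fst (q t) + mu) * snd (p t) - snd (q t) * fst (p t) < mu * (fst (q t) + mu)"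
    have dpos: "\<forall>t\<in>I. - (Im (w' t / w t) - 1) > 0"
      using neg key den by (auto intro!: divide_neg_pos)
    have nd: "\<forall>t\<in>I. ((\<lambda>t. - \<phi> t) has_real_derivative - (Im (w' t / w t) - 1)) (at t within I)"
      using \<phi>d DERIV_minus by blast
    show "prograde mu I q" unfolding prograde_def
      using angle pos_deriv_incr[OF I nd dpos] by force
  qed
qed

end
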